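(* Let $f:\mathbb{R}^n_{>0}\to\mathbb{R}^n_{>0}$ be order-preserving and homogeneous. Suppose $f$ has an eigenvector $u\in\mathbb{R}^n_{>0}$ with $\|u\|=1$ and $f$ is differentiable at $u$. If $\mathcal{G}(f'(u))$ has a unique final class, then every eigenvector of $f$ in $\mathbb{R}^n_{>0}$ is a scalar multiple of $u$. If, in addition, this final class is primitive, then $\lim_{k\to\infty}f^k(x)/\|f^k(x)\|=u$ for all $x\in\mathbb{R}^n_{>0}$.
   Context: $\|\cdot\|$ is a norm on $\mathbb{R}^n$; entrywise order. Order-preserving: $x\le y\Rightarrow f(x)\le f(y)$; homogeneous: $f(tx)=tf(x)$ for $t>0$. $f'(u)$ is the Jacobian matrix (a nonnegative matrix). For a nonnegative $n\times n$ matrix $A=[a_{ij}]$, $\mathcal{G}(A)$ is the directed graph on $[n]=\{1,\dots,n\}$ with an arc $i\to j$ when $a_{ij}\neq0$. A final class is a strongly connected component with no arcs leaving it. A strongly connected component is primitive if there is $m\in\mathbb{N}$ such that every ordered pair of its vertices is joined by a path of length exactly $m$. *)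

theory Defs
  imports "HOL-Analysis.Analysis"
begin

definition pos_cone :: "(real^'n) set" where
  "pos_cone = {x. \<forall>i. 0 < x $ i}"

definition is_norm :: "(real^'n \<Rightarrow> real) \<Rightarrow> bool" where
  "is_norm N \<longleftrightarrow> (\<forall>x y. N (x + y) \<le> N x + N y) \<and> (\<forall>c x. N (c *\<^sub>R x) = \<bar>c\<bar> * N x)
      \<and> (\<forall>x. N x = 0 \<longleftrightarrow> x = 0)"

definition arcs :: "real^'n^'n \<Rightarrow> ('n \<times> 'n) set" where
  "arcs A = {(i, j). A $ i $ j \<noteq> 0}"

definition scc :: "real^'n^'n \<Rightarrow> 'n set \<Rightarrow> bool" where
  "scc A C \<longleftrightarrow> (\<exists>i. C = {j. (i, j) \<in> (arcs A)\<^sup>* \<and> (j, i) \<in> (arcs A)\<^sup>*})"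

definition final_class :: "real^'n^'n \<Rightarrow> 'n set \<Rightarrow> bool" where
  "final_class A C \<longleftrightarrow> scc A C \<and> (\<forall>i\<in>C. \<forall>j. (i, j) \<in> arcs A \<longrightarrow> j \<in> C)"

definition primitive_class :: "real^'n^'n \<Rightarrow> 'n set \<Rightarrow> bool" where
  "primitive_class A C \<longleftrightarrow> (\<exists>m::nat. m \<ge> 1 \<and> (\<forall>i\<in>C. \<forall>j\<in>C. (i, j) \<in> (arcs A) ^^ m))"

end

theory Submission
  imports Defs
begin



lemma dir_deriv:
  fixes f :: "real^'n \<Rightarrow> real^'n"
  assumes "(f has_derivative D) (at u)"
  shows "((\<lambda>t. f (u + t *\<^sub>R d) $ i) has_real_derivative (D d $ i)) (at 0)"
proof -
  have lin: "linear D" using assms has_derivative_linear by blast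
  have g: "((\<lambda>t::real. u + t *\<^sub>R d) has_derivative (\<lambda>t. t *\<^sub>R d)) (at 0)"
    by (auto intro!: derivative_eq_intros)
  have f': "(f has_derivative D) (at ((\<lambda>t::real. u + t *\<^sub>R d) 0))" using assms by simp
  have "((\<lambda>t. f (u + t *\<^sub>R d)) has_derivative (\<lambda>t. D (t *\<^sub>R d))) (at 0)"
    using has_derivative_compose[OF g f'] by simp
  then have "((\<lambda>t. f (u + t *\<^sub>R d) $ i) has_derivative (\<lambda>t. D (t *\<^sub>R d) $ i)) (at 0)"
    using bounded_linear.has_derivative[OF bounded_linear_vec_nth] by blast
  moreover have "(\<lambda>t. D (t *\<^sub>R d) $ i) = (\<lambda>t. (D d $ i) * t)"
    using lin by (auto simp: linear_scale mult.commute)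
  ultimately show ?thesis by (simp add: has_field_derivative_def)
qed

lemma dir_deriv_ge:
  fixes f :: "real^'n \<Rightarrow> real^'n"
  assumes "(f has_derivative D) (at u)"
    and "\<exists>\<delta>>0. \<forall>t. 0<t \<and> t<\<delta> \<longrightarrow> f u $ i \<le> f (u + t *\<^sub>R d) $ i"
  shows "0 \<le> D d $ i"
proof (rule ccontr)
  assume "\<not> 0 \<le> D d $ i"
  then obtain e where e: "e > 0" "\<forall>h>0. h < e \<longrightarrow> f (u + (0+h) *\<^sub>R d) $ i < f (u + 0 *\<^sub>R d) $ i"
    using DERIV_neg_dec_right[OF dir_deriv[OF assms(1), of d i]] by force
  obtain \<delta> where d: "\<delta>>0" "\<forall>t. 0<t \<and> t<\<delta> \<longrightarrow> f u $ i \<le> f (u + t *\<^sub>R d) $ i" using assms(2) by blast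
  define h where "h = min e \<delta> / 2"
  have h: "0 < h" "h < e" "h < \<delta>" using e(1) d(1) by (auto simp: h_def)
  have "f u $ i \<le> f (u + h *\<^sub>R d) $ i" using d(2) h by blast
  moreover have "f (u + h *\<^sub>R d) $ i < f u $ i" using e(2) h by auto
  ultimately show False by simp
qed

lemma dir_deriv_le:
  fixes f :: "real^'n \<Rightarrow> real^'n"
  assumes "(f has_derivative D) (at u)"
    and "\<exists>\<delta>>0. \<forall>t. 0<t \<and> t<\<delta> \<longrightarrow> f (u + t *\<^sub>R d) $ i \<le> f u $ i"
  shows "D d $ i \<le> 0"
proof (rule ccontr)
  assume "\<not> D d $ i \<le> 0"
  then obtain e where e: "e > 0" "\<forall>h>0. h < e \<longrightarrow> f (u + 0 *\<^sub>R d) $ i < f (u + (0+h) *\<^sub>R d) $ i"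
    using DERIV_pos_inc_right[OF dir_deriv[OF assms(1), of d i]] by force
  obtain \<delta> where d: "\<delta>>0" "\<forall>t. 0<t \<and> t<\<delta> \<longrightarrow> f (u + t *\<^sub>R d) $ i \<le> f u $ i" using assms(2) by blast
  define h where "h = min e \<delta> / 2"
  have h: "0 < h" "h < e" "h < \<delta>" using e(1) d(1) by (auto simp: h_def)
  have "f (u + h *\<^sub>R d) $ i \<le> f u $ i" using d(2) h by blast
  moreover have "f u $ i < f (u + h *\<^sub>R d) $ i" using e(2) h by auto
  ultimately show False by simp
qed




lemma closed_final:
  fixes A :: "real^'n^'n"
  assumes "i0 \<in> S" "\<forall>i\<in>S. \<forall>j. (i,j) \<in> arcs A \<longrightarrow> j \<in> S"
  shows "\<exists>C. final_class A C \<and> C \<subseteq> S"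
proof -
  define R where "R = (\<lambda>i. {j. (i,j) \<in> (arcs A)\<^sup>*})"
  obtain i where i: "i \<in> S" "\<forall>i'. i' \<in> S \<longrightarrow> card (R i) \<le> card (R i')"
    using ex_has_least_nat[of "\<lambda>i. i \<in> S" i0 "\<lambda>i. card (R i)"] assms(1) by blast
  have RS: "R i \<subseteq> S"
  proof
    fix j assume "j \<in> R i"
    then have "(i,j) \<in> (arcs A)\<^sup>*" by (simp add: R_def)
    then show "j \<in> S"
    proof (induction rule: rtrancl_induct)
      case base show ?case using i(1) .
    next
      case (step y z) then show ?case using assms(2) by blast
    qed
  qed
  have bk: "(j,i) \<in> (arcs A)\<^sup>*" if ij: "(i,j) \<in> (arcs A)\<^sup>*" for j
  proof -
    have sub: "R j \<subseteq> R i"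
    proof
      fix x assume "x \<in> R j"
      then have "(j,x) \<in> (arcs A)\<^sup>*" by (simp add: R_def)
      with ij have "(i,x) \<in> (arcs A)\<^sup>*" by (rule rtrancl_trans)
      then show "x \<in> R i" by (simp add: R_def)
    qed
    have "j \<in> R i" using ij by (simp add: R_def)
    then have "j \<in> S" using RS by blast
    then have "card (R i) \<le> card (R j)" using i(2) by blast
    moreover have "card (R j) \<le> card (R i)" using sub by (intro card_mono) simp_all
    ultimately have "card (R j) = card (R i)" by simp
    then have "R j = R i" using card_subset_eq[OF _ sub] by simp
    moreover have "i \<in> R i" by (simp add: R_def)
    ultimately have "i \<in> R j" by simp
    then show ?thesis by (simp add: R_def)
  qed
  define C where "C = {j. (i,j) \<in> (arcs A)\<^sup>* \<and> (j,i) \<in> (arcs A)\<^sup>*}"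
  have "final_class A C" unfolding final_class_def scc_def
  proof
    show "\<exists>i'. C = {j. (i', j) \<in> (arcs A)\<^sup>* \<and> (j, i') \<in> (arcs A)\<^sup>*}" unfolding C_def by blast
    show "\<forall>k\<in>C. \<forall>l. (k,l) \<in> arcs A \<longrightarrow> l \<in> C"
    proof (intro ballI allI impI)
      fix k l assume k: "k \<in> C" and kl: "(k,l) \<in> arcs A"
      have "(i,k) \<in> (arcs A)\<^sup>*" using k by (simp add: C_def)
      then have il: "(i,l) \<in> (arcs A)\<^sup>*" using kl by (rule rtrancl_into_rtrancl)
      then have "(l,i) \<in> (arcs A)\<^sup>*" by (rule bk)
      then show "l \<in> C" using il by (simp add: C_def)
    qed
  qed
  moreover have "C \<subseteq> S"
  proof
    fix x assume "x \<in> C"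
    then have "x \<in> R i" by (simp add: C_def R_def)
    then show "x \<in> S" using RS by blast
  qed
  ultimately show ?thesis by blast
qed

lemma final_nonempty: "final_class A C \<Longrightarrow> \<exists>i. i \<in> C"
  unfolding final_class_def scc_def by blast

lemma prim_reach:
  fixes A :: "real^'n^'n"
  assumes "\<exists>!C. final_class A C" "\<forall>C. final_class A C \<longrightarrow> primitive_class A C"
  shows "\<exists>j0 K. \<forall>i. (i,j0) \<in> (arcs A)^^K"
proof -
  obtain F where F: "final_class A F" "\<And>C. final_class A C \<Longrightarrow> C = F" using assms(1) by blast
  obtain m where m: "m \<ge> 1" "\<forall>a\<in>F. \<forall>b\<in>F. (a,b) \<in> (arcs A)^^m"
    using assms(2) F(1) unfolding primitive_class_def by blast
  obtain m' where m': "m = Suc m'" using m(1) by (cases m) auto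
  obtain j0 where j0: "j0 \<in> F" using final_nonempty[OF F(1)] by blast
  have len: "\<forall>a\<in>F. \<forall>b\<in>F. (a,b) \<in> (arcs A)^^k" if "m \<le> k" for k
    using that
  proof (induction k rule: dec_induct)
    case base then show ?case using m(2) by blast
  next
    case (step k)
    show ?case
    proof (intro ballI)
      fix a b assume ab: "a \<in> F" "b \<in> F"
      have "(a,a) \<in> (arcs A)^^m" using m(2) ab by blast
      then have "(a,a) \<in> (arcs A)^^(Suc m')" by (simp only: m')
      from relpow_Suc_D2[OF this] obtain a' where a': "(a,a') \<in> arcs A" by blast
      then have "a' \<in> F" using F(1) ab unfolding final_class_def by blast
      then have "(a',b) \<in> (arcs A)^^k" using step.IH ab by blast
      with a' show "(a,b) \<in> (arcs A)^^(Suc k)" by (rule relpow_Suc_I2)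
    qed
  qed
  have reach: "(i,j0) \<in> (arcs A)\<^sup>*" for i
  proof -
    have cl: "\<forall>a\<in>{j. (i,j) \<in> (arcs A)\<^sup>*}. \<forall>b. (a,b) \<in> arcs A \<longrightarrow> b \<in> {j. (i,j) \<in> (arcs A)\<^sup>*}"
    proof (intro ballI allI impI)
      fix a b assume a: "a \<in> {j. (i,j) \<in> (arcs A)\<^sup>*}" and ab: "(a,b) \<in> arcs A"
      have "(i,a) \<in> (arcs A)\<^sup>*" using a by simp
      then have "(i,b) \<in> (arcs A)\<^sup>*" using ab by (rule rtrancl_into_rtrancl)
      then show "b \<in> {j. (i,j) \<in> (arcs A)\<^sup>*}" by simp
    qed
    have i_in: "i \<in> {j. (i,j) \<in> (arcs A)\<^sup>*}" by simp
    obtain C where C: "final_class A C" "C \<subseteq> {j. (i,j) \<in> (arcs A)\<^sup>*}"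
      using closed_final[OF i_in cl] by blast
    then show ?thesis using F(2)[OF C(1)] j0 by blast
  qed
  have "\<forall>i. \<exists>l. (i,j0) \<in> (arcs A)^^l"
  proof
    fix i show "\<exists>l. (i,j0) \<in> (arcs A)^^l" using reach[of i] by (simp only: rtrancl_power)
  qed
  then have "\<exists>l. \<forall>i. (i,j0) \<in> (arcs A)^^(l i)" by (rule choice)
  then obtain l where l: "\<And>i. (i,j0) \<in> (arcs A)^^(l i)" by blast
  define K where "K = (\<Sum>i\<in>UNIV. l i) + m"
  have "(i,j0) \<in> (arcs A)^^K" for i
  proof -
    have li: "l i \<le> (\<Sum>i\<in>UNIV. l i)" by (rule member_le_sum) auto
    then have mk: "m \<le> K - l i" by (simp add: K_def)
    have "(j0,j0) \<in> (arcs A)^^(K - l i)" using len[OF mk] j0 by blast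
    then have "(i,j0) \<in> (arcs A)^^(l i) O (arcs A)^^(K - l i)" using l by blast
    then have "(i,j0) \<in> (arcs A)^^(l i + (K - l i))" by (simp only: relpow_add)
    moreover have "l i + (K - l i) = K" using li by (simp add: K_def)
    ultimately show ?thesis by simp
  qed
  then show ?thesis by blast
qed



lemma entry_nonneg:
  fixes f :: "real^'n \<Rightarrow> real^'n"
  assumes order_pres: "\<And>x y. x \<in> pos_cone \<Longrightarrow> y \<in> pos_cone \<Longrightarrow> (\<forall>i. x $ i \<le> y $ i)
                       \<Longrightarrow> (\<forall>i. f x $ i \<le> f y $ i)"
    and u_pos: "u \<in> pos_cone" and deriv: "(f has_derivative D) (at u)"
  shows "0 \<le> matrix D $ i $ j"
proof -
  have "0 \<le> D (axis j 1) $ i"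
  proof (rule dir_deriv_ge[OF deriv])
    show "\<exists>\<delta>>0. \<forall>t. 0<t \<and> t<\<delta> \<longrightarrow> f u $ i \<le> f (u + t *\<^sub>R axis j 1) $ i"
    proof (intro exI[of _ 1] conjI allI impI)
      fix t :: real assume t: "0<t \<and> t<1"
      have c: "u + t *\<^sub>R axis j 1 \<in> pos_cone" unfolding pos_cone_def
      proof (intro CollectI allI)
        fix k have "0 < u$k" using u_pos by (simp add: pos_cone_def)
        then show "0 < (u + t *\<^sub>R axis j 1) $ k" using t by (cases "k = j") (auto simp: axis_def)
      qed
      have "\<forall>k. u $ k \<le> (u + t *\<^sub>R axis j 1) $ k" using t by (auto simp: axis_def)
      then show "f u $ i \<le> f (u + t *\<^sub>R axis j 1) $ i" using order_pres[OF u_pos c] by blast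
    qed simp
  qed
  then show ?thesis by (simp add: matrix_def)
qed

lemma max_closed:
  fixes f :: "real^'n \<Rightarrow> real^'n"
  assumes order_pres: "\<And>x y. x \<in> pos_cone \<Longrightarrow> y \<in> pos_cone \<Longrightarrow> (\<forall>i. x $ i \<le> y $ i)
                       \<Longrightarrow> (\<forall>i. f x $ i \<le> f y $ i)"
    and homog: "\<And>x t. x \<in> pos_cone \<Longrightarrow> t > 0 \<Longrightarrow> f (t *\<^sub>R x) = t *\<^sub>R f x"
    and u_pos: "u \<in> pos_cone" and u_eig: "f u = r *\<^sub>R u"
    and deriv: "(f has_derivative D) (at u)"
    and z: "z \<in> pos_cone" "\<beta> > 0" "\<forall>k. z$k \<le> \<beta> * u$k" "f z $ i = r * (\<beta> * u$i)"
    and arc: "(i,j) \<in> arcs (matrix D)"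
  shows "z$j = \<beta> * u$j"
proof (rule ccontr)
  assume ne: "z$j \<noteq> \<beta>*u$j"
  then have lt: "z$j < \<beta>*u$j" using z(3) by (simp add: order.not_eq_order_implies_strict)
  have lin: "linear D" using deriv has_derivative_linear by blast
  define \<delta> where "\<delta> = min (u$j) ((\<beta>*u$j - z$j)/\<beta>)"
  have \<delta>: "\<delta> > 0" using lt u_pos z(2) by (auto simp: \<delta>_def pos_cone_def)
  have "0 \<le> D (- axis j 1) $ i"
  proof (rule dir_deriv_ge[OF deriv])
    show "\<exists>\<delta>>0. \<forall>t. 0<t \<and> t<\<delta> \<longrightarrow> f u $ i \<le> f (u + t *\<^sub>R (- axis j 1)) $ i"
    proof (intro exI[of _ \<delta>] conjI allI impI)
      show "0 < \<delta>" using \<delta> .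
    next
      fix t :: real assume t: "0 < t \<and> t < \<delta>"
      define p where "p = u + t *\<^sub>R (- axis j 1)"
      have pc: "p \<in> pos_cone" using u_pos t by (auto simp: pos_cone_def axis_def \<delta>_def p_def)
      have bp: "\<beta> *\<^sub>R p \<in> pos_cone" using pc z(2) by (auto simp: pos_cone_def)
      have "\<forall>k. z$k \<le> (\<beta> *\<^sub>R p)$k"
      proof
        fix k show "z$k \<le> (\<beta> *\<^sub>R p)$k"
        proof (cases "k = j")
          case True
          have "t \<le> (\<beta>*u$j - z$j)/\<beta>" using t by (auto simp: \<delta>_def)
          then have "\<beta> * t \<le> \<beta>*u$j - z$j" using z(2) by (simp add: field_simps)
          then show ?thesis using True by (simp add: axis_def algebra_simps p_def)
        next
          case False then show ?thesis using z(3) by (simp add: axis_def p_def)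
        qed
      qed
      then have "f z $ i \<le> f (\<beta> *\<^sub>R p) $ i" using order_pres[OF z(1) bp] by blast
      also have "\<dots> = \<beta> * f p $ i" using homog[OF pc z(2)] by simp
      finally have "\<beta> * (r * u$i) \<le> \<beta> * f p $ i" using z(4) by (simp add: algebra_simps)
      then have "r * u$i \<le> f p $ i" using z(2) by simp
      then show "f u $ i \<le> f (u + t *\<^sub>R (- axis j 1)) $ i" using u_eig by (simp add: p_def)
    qed
  qed
  moreover have "D (- axis j 1) = - D (axis j 1)"
    using linear_scale[OF lin, of "-1" "axis j 1"] by simp
  ultimately have "matrix D $ i $ j \<le> 0" by (simp add: matrix_def)
  moreover have "0 \<le> matrix D $ i $ j" by (rule entry_nonneg[OF order_pres u_pos deriv])
  ultimately show False using arc by (simp add: arcs_def)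
qed

lemma min_closed:
  fixes f :: "real^'n \<Rightarrow> real^'n"
  assumes order_pres: "\<And>x y. x \<in> pos_cone \<Longrightarrow> y \<in> pos_cone \<Longrightarrow> (\<forall>i. x $ i \<le> y $ i)
                       \<Longrightarrow> (\<forall>i. f x $ i \<le> f y $ i)"
    and homog: "\<And>x t. x \<in> pos_cone \<Longrightarrow> t > 0 \<Longrightarrow> f (t *\<^sub>R x) = t *\<^sub>R f x"
    and u_pos: "u \<in> pos_cone" and u_eig: "f u = r *\<^sub>R u"
    and deriv: "(f has_derivative D) (at u)"
    and z: "z \<in> pos_cone" "\<alpha> > 0" "\<forall>k. \<alpha> * u$k \<le> z$k" "f z $ i = r * (\<alpha> * u$i)"
    and arc: "(i,j) \<in> arcs (matrix D)"
  shows "z$j = \<alpha> * u$j"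
proof (rule ccontr)
  assume ne: "z$j \<noteq> \<alpha>*u$j"
  then have lt: "\<alpha>*u$j < z$j" using z(3) by (metis order.not_eq_order_implies_strict)
  define \<delta> where "\<delta> = (z$j - \<alpha>*u$j)/\<alpha>"
  have \<delta>: "\<delta> > 0" using lt z(2) by (auto simp: \<delta>_def)
  have "D (axis j 1) $ i \<le> 0"
  proof (rule dir_deriv_le[OF deriv])
    show "\<exists>\<delta>>0. \<forall>t. 0<t \<and> t<\<delta> \<longrightarrow> f (u + t *\<^sub>R axis j 1) $ i \<le> f u $ i"
    proof (intro exI[of _ \<delta>] conjI allI impI)
      show "0 < \<delta>" using \<delta> .
    next
      fix t :: real assume t: "0 < t \<and> t < \<delta>"
      define p where "p = u + t *\<^sub>R axis j 1"
      have pc: "p \<in> pos_cone" unfolding pos_cone_def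
      proof (intro CollectI allI)
        fix k have "0 < u$k" using u_pos by (simp add: pos_cone_def)
        then show "0 < p $ k" using t by (cases "k = j") (auto simp: axis_def p_def)
      qed
      have bp: "\<alpha> *\<^sub>R p \<in> pos_cone" using pc z(2) by (auto simp: pos_cone_def)
      have "\<forall>k. (\<alpha> *\<^sub>R p)$k \<le> z$k"
      proof
        fix k show "(\<alpha> *\<^sub>R p)$k \<le> z$k"
        proof (cases "k = j")
          case True
          have "t \<le> (z$j - \<alpha>*u$j)/\<alpha>" using t by (auto simp: \<delta>_def)
          then have "\<alpha> * t \<le> z$j - \<alpha>*u$j" using z(2) by (simp add: field_simps)
          then show ?thesis using True by (simp add: axis_def algebra_simps p_def)
        next
          case False then show ?thesis using z(3) by (simp add: axis_def p_def)
        qed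
      qed
      then have "f (\<alpha> *\<^sub>R p) $ i \<le> f z $ i" using order_pres[OF bp z(1)] by blast
      moreover have "f (\<alpha> *\<^sub>R p) $ i = \<alpha> * f p $ i" using homog[OF pc z(2)] by simp
      ultimately have "\<alpha> * f p $ i \<le> \<alpha> * (r * u$i)" using z(4) by (simp add: algebra_simps)
      then have "f p $ i \<le> r * u$i" using z(2) by simp
      then show "f (u + t *\<^sub>R axis j 1) $ i \<le> f u $ i" using u_eig by (simp add: p_def)
    qed
  qed
  then have "matrix D $ i $ j \<le> 0" by (simp add: matrix_def)
  moreover have "0 \<le> matrix D $ i $ j" by (rule entry_nonneg[OF order_pres u_pos deriv])
  ultimately show False using arc by (simp add: arcs_def)
qed



lemma seq_cont:
  fixes f :: "real^'n \<Rightarrow> real^'n"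
  assumes order_pres: "\<And>x y. x \<in> pos_cone \<Longrightarrow> y \<in> pos_cone \<Longrightarrow> (\<forall>i. x $ i \<le> y $ i)
                       \<Longrightarrow> (\<forall>i. f x $ i \<le> f y $ i)"
    and homog: "\<And>x t. x \<in> pos_cone \<Longrightarrow> t > 0 \<Longrightarrow> f (t *\<^sub>R x) = t *\<^sub>R f x"
    and y: "y \<in> pos_cone" and lim: "w \<longlonglongrightarrow> y" and w: "\<And>k. w k \<in> pos_cone"
  shows "(\<lambda>k. f (w k)) \<longlonglongrightarrow> f y"
proof -
  have ypos: "0 < y $ i" for i using y by (simp add: pos_cone_def)
  have ynz: "y $ i \<noteq> 0" for i using ypos[of i] by simp
  have ynn: "0 \<le> y $ i" for i using ypos[of i] by simp
  define s where "s k = (\<Sum>i\<in>UNIV. \<bar>w k $ i - y $ i\<bar> / y $ i)" for k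
  have "(\<lambda>k. \<Sum>i\<in>UNIV. \<bar>w k $ i - y $ i\<bar> / y $ i) \<longlonglongrightarrow> (\<Sum>i\<in>UNIV. \<bar>y $ i - y $ i\<bar> / y $ i)"
    by (intro tendsto_sum tendsto_divide tendsto_rabs tendsto_diff tendsto_vec_nth lim tendsto_const) (simp_all add: ynz)
  then have s0: "s \<longlonglongrightarrow> 0" by (simp add: s_def[abs_def])
  have snn: "0 \<le> s k" for k unfolding s_def by (intro sum_nonneg) (simp add: ynn)
  have ev: "eventually (\<lambda>k. s k < 1) sequentially" using order_tendstoD(2)[OF s0] by simp
  have bnd: "(1 - s k) * y$i \<le> w k $ i \<and> w k $ i \<le> (1 + s k) * y$i" for k i
  proof -
    have "\<bar>w k $ i - y $ i\<bar> / y $ i \<le> s k" unfolding s_def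
      by (rule member_le_sum) (auto simp: ynn)
    then have "\<bar>w k $ i - y $ i\<bar> \<le> s k * y $ i" using ypos[of i] by (simp add: divide_le_eq)
    then show ?thesis by (auto simp: algebra_simps abs_le_iff)
  qed
  show ?thesis
  proof (rule vec_tendstoI)
    fix i
    have lo: "eventually (\<lambda>k. (1 - s k) * f y $ i \<le> f (w k) $ i) sequentially"
      using ev
    proof (rule eventually_mono)
      fix k assume sk: "s k < 1"
      have c1: "(1 - s k) *\<^sub>R y \<in> pos_cone" using y sk by (auto simp: pos_cone_def)
      have "\<forall>l. ((1 - s k) *\<^sub>R y)$l \<le> w k $ l" using bnd by simp
      then have "f ((1 - s k) *\<^sub>R y) $ i \<le> f (w k) $ i" using order_pres[OF c1 w] by blast
      then show "(1 - s k) * f y $ i \<le> f (w k) $ i" using homog[OF y, of "1 - s k"] sk by simp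
    qed
    have hi: "eventually (\<lambda>k. f (w k) $ i \<le> (1 + s k) * f y $ i) sequentially"
    proof (rule always_eventually, rule allI)
      fix k
      have c1: "(1 + s k) *\<^sub>R y \<in> pos_cone" using y snn[of k] by (auto simp: pos_cone_def add_pos_nonneg)
      have "\<forall>l. w k $ l \<le> ((1 + s k) *\<^sub>R y)$l" using bnd by simp
      then have "f (w k) $ i \<le> f ((1 + s k) *\<^sub>R y) $ i" using order_pres[OF w c1] by blast
      then show "f (w k) $ i \<le> (1 + s k) * f y $ i" using homog[OF y, of "1 + s k"] snn[of k] by simp
    qed
    have "(\<lambda>k. (1 - s k) * f y $ i) \<longlonglongrightarrow> (1 - 0) * f y $ i" by (intro tendsto_intros s0)
    then have l1: "(\<lambda>k. (1 - s k) * f y $ i) \<longlonglongrightarrow> f y $ i" by simp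
    have "(\<lambda>k. (1 + s k) * f y $ i) \<longlonglongrightarrow> (1 + 0) * f y $ i" by (intro tendsto_intros s0)
    then have l2: "(\<lambda>k. (1 + s k) * f y $ i) \<longlonglongrightarrow> f y $ i" by simp
    show "(\<lambda>k. f (w k) $ i) \<longlonglongrightarrow> f y $ i" using tendsto_sandwich[OF lo hi l1 l2] .
  qed
qed

lemma N_zero: "is_norm N \<Longrightarrow> N 0 = 0"
  unfolding is_norm_def by blast

lemma N_sum: assumes "is_norm N" "finite S" shows "N (sum v S) \<le> (\<Sum>i\<in>S. N (v i))"
  using assms(2)
proof (induction S rule: finite_induct)
  case empty then show ?case using N_zero[OF assms(1)] by simp
next
  case (insert x F)
  then have "N (v x + sum v F) \<le> N (v x) + N (sum v F)" using assms(1) unfolding is_norm_def by blast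
  then show ?case using insert by simp
qed

lemma N_bound:
  fixes N :: "real^'n \<Rightarrow> real"
  assumes "is_norm N" shows "N w \<le> (\<Sum>i\<in>UNIV. \<bar>w$i\<bar> * N (axis i 1))"
proof -
  have "w = (\<Sum>i\<in>UNIV. w$i *\<^sub>R axis i 1)"
    using basis_expansion[of w] by (simp add: scalar_mult_eq_scaleR)
  then have "N w = N (\<Sum>i\<in>UNIV. w$i *\<^sub>R axis i 1)" by simp
  also have "\<dots> \<le> (\<Sum>i\<in>UNIV. N (w$i *\<^sub>R axis i 1))" by (rule N_sum[OF assms]) simp
  also have "\<dots> = (\<Sum>i\<in>UNIV. \<bar>w$i\<bar> * N (axis i 1))" using assms unfolding is_norm_def by simp
  finally show ?thesis .
qed

lemma N_cont:
  fixes N :: "real^'n \<Rightarrow> real"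
  assumes N: "is_norm N" and lim: "X \<longlonglongrightarrow> a"
  shows "(\<lambda>k. N (X k)) \<longlonglongrightarrow> N a"
proof -
  have ta: "\<forall>x y. N (x + y) \<le> N x + N y" and sc: "\<forall>c x. N (c *\<^sub>R x) = \<bar>c\<bar> * N x"
    using N unfolding is_norm_def by blast+
  have tri: "\<bar>N x - N y\<bar> \<le> N (x - y)" for x y
  proof -
    have "N x \<le> N (x - y) + N y" using ta[rule_format, of "x - y" y] by simp
    moreover have "N y \<le> N (y - x) + N x" using ta[rule_format, of "y - x" x] by simp
    moreover have "N (y - x) = N (x - y)" using sc[rule_format, of "-1" "x - y"] by simp
    ultimately show ?thesis by auto
  qed
  define g where "g k = (\<Sum>i\<in>UNIV. \<bar>X k $ i - a $ i\<bar> * N (axis i 1))" for k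
  have "(\<lambda>k. \<Sum>i\<in>UNIV. \<bar>X k $ i - a $ i\<bar> * N (axis i 1)) \<longlonglongrightarrow> (\<Sum>i\<in>UNIV. \<bar>a $ i - a $ i\<bar> * N (axis i 1))"
    by (intro tendsto_intros lim)
  then have g0: "g \<longlonglongrightarrow> 0" by (simp add: g_def[abs_def])
  have "(\<lambda>k. N (X k) - N a) \<longlonglongrightarrow> 0"
  proof (rule Lim_null_comparison[OF always_eventually g0], rule allI)
    fix k
    have "norm (N (X k) - N a) \<le> N (X k - a)" using tri by simp
    also have "\<dots> \<le> g k" unfolding g_def using N_bound[OF N, of "X k - a"] by simp
    finally show "norm (N (X k) - N a) \<le> g k" .
  qed
  then show ?thesis by (simp add: LIM_zero_iff)
qed



theorem theorem6p1:
  fixes f :: "real^'n \<Rightarrow> real^'n" and N :: "real^'n \<Rightarrow> real"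
    and u :: "real^'n" and r :: real and D :: "real^'n \<Rightarrow> real^'n"
  assumes norm: "is_norm N"
    and maps: "\<And>x. x \<in> pos_cone \<Longrightarrow> f x \<in> pos_cone"
    and order_pres: "\<And>x y. x \<in> pos_cone \<Longrightarrow> y \<in> pos_cone \<Longrightarrow> (\<forall>i. x $ i \<le> y $ i)
                       \<Longrightarrow> (\<forall>i. f x $ i \<le> f y $ i)"
    and homog: "\<And>x t. x \<in> pos_cone \<Longrightarrow> t > 0 \<Longrightarrow> f (t *\<^sub>R x) = t *\<^sub>R f x"
    and u_pos: "u \<in> pos_cone" and u_norm: "N u = 1" and u_eig: "f u = r *\<^sub>R u"
    and deriv: "(f has_derivative D) (at u)"
    and unique_final: "\<exists>!C. final_class (matrix D) C"
  shows "(\<forall>v \<in> pos_cone. (\<exists>\<mu>::real. f v = \<mu> *\<^sub>R v) \<longrightarrow> (\<exists>c::real. v = c *\<^sub>R u))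
       \<and> ((\<forall>C. final_class (matrix D) C \<longrightarrow> primitive_class (matrix D) C) \<longrightarrow>
            (\<forall>x \<in> pos_cone. (\<lambda>k. (1 / N ((f ^^ k) x)) *\<^sub>R (f ^^ k) x) \<longlonglongrightarrow> u))"
proof -
  have upos: "\<And>k. 0 < u$k" using u_pos by (simp add: pos_cone_def)
  have rpos: "r > 0"
  proof -
    obtain i :: 'n where True by simp
    have "0 < f u $ i" using maps[OF u_pos] by (simp add: pos_cone_def)
    then have "0 < r * u$i" using u_eig by simp
    then show ?thesis using upos[of i] by (simp add: zero_less_mult_iff)
  qed
  have scale_cone: "\<And>z t. z \<in> pos_cone \<Longrightarrow> t > 0 \<Longrightarrow> t *\<^sub>R z \<in> pos_cone"
    by (simp add: pos_cone_def)
  define Mx where "Mx w = Max (range (\<lambda>k. w$k / u$k))" for w :: "real^'n"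
  define mn where "mn w = Min (range (\<lambda>k. w$k / u$k))" for w :: "real^'n"
  have Mx_ge: "w$k \<le> Mx w * u$k" for w k
  proof -
    have "w$k / u$k \<le> Mx w" unfolding Mx_def by (rule Max_ge) auto
    then show ?thesis using upos[of k] by (simp add: divide_le_eq)
  qed
  have mn_le: "mn w * u$k \<le> w$k" for w k
  proof -
    have "mn w \<le> w$k / u$k" unfolding mn_def by (rule Min_le) auto
    then show ?thesis using upos[of k] by (simp add: le_divide_eq)
  qed
  have Mx_at: "\<exists>k. w$k = Mx w * u$k" for w
  proof -
    have "Mx w \<in> range (\<lambda>k. w$k / u$k)" unfolding Mx_def by (rule Max_in) auto
    then obtain k where "Mx w = w$k / u$k" by blast
    then show ?thesis using upos[of k] by (intro exI[of _ k]) simp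
  qed
  have mn_at: "\<exists>k. w$k = mn w * u$k" for w
  proof -
    have "mn w \<in> range (\<lambda>k. w$k / u$k)" unfolding mn_def by (rule Min_in) auto
    then obtain k where "mn w = w$k / u$k" by blast
    then show ?thesis using upos[of k] by (intro exI[of _ k]) simp
  qed
  have mn_pos: "0 < mn w" if "w \<in> pos_cone" for w
  proof -
    obtain k where "w$k = mn w * u$k" using mn_at by blast
    moreover have "0 < w$k" using that by (simp add: pos_cone_def)
    ultimately show ?thesis using upos[of k] by (simp add: zero_less_mult_iff)
  qed
  have mn_Mx: "mn w \<le> Mx w" for w
  proof -
    obtain k where "w$k = mn w * u$k" using mn_at by blast
    then have "mn w * u$k \<le> Mx w * u$k" using Mx_ge[of w k] by simp
    then show ?thesis using upos[of k] by simp
  qed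
  have Mx_pos: "0 < Mx w" if "w \<in> pos_cone" for w
    using mn_pos[OF that] mn_Mx[of w] by simp

  have P1: "\<forall>v \<in> pos_cone. (\<exists>\<mu>::real. f v = \<mu> *\<^sub>R v) \<longrightarrow> (\<exists>c::real. v = c *\<^sub>R u)"
  proof (intro ballI impI)
    fix v assume v: "v \<in> pos_cone" and "\<exists>\<mu>::real. f v = \<mu> *\<^sub>R v"
    then obtain \<mu> where mu: "f v = \<mu> *\<^sub>R v" by blast
    define \<beta> where "\<beta> = Mx v"
    define \<alpha> where "\<alpha> = mn v"
    have vpos: "\<And>k. 0 < v$k" using v by (simp add: pos_cone_def)
    have bpos: "\<beta> > 0" using Mx_pos[OF v] by (simp add: \<beta>_def)
    have apos: "\<alpha> > 0" using mn_pos[OF v] by (simp add: \<alpha>_def)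
    have ub: "\<forall>k. v$k \<le> \<beta> * u$k" using Mx_ge by (simp add: \<beta>_def)
    have lb: "\<forall>k. \<alpha> * u$k \<le> v$k" using mn_le by (simp add: \<alpha>_def)
    obtain a where a: "v$a = \<beta> * u$a" using Mx_at \<beta>_def by blast
    obtain b where b: "v$b = \<alpha> * u$b" using mn_at \<alpha>_def by blast
    have fb: "f (\<beta> *\<^sub>R u) = \<beta> *\<^sub>R (r *\<^sub>R u)" using homog[OF u_pos bpos] u_eig by simp
    have fa: "f (\<alpha> *\<^sub>R u) = \<alpha> *\<^sub>R (r *\<^sub>R u)" using homog[OF u_pos apos] u_eig by simp
    have "\<forall>k. f v $ k \<le> f (\<beta> *\<^sub>R u) $ k"
      using order_pres[OF v scale_cone[OF u_pos bpos]] ub by simp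
    then have "f v $ a \<le> f (\<beta> *\<^sub>R u) $ a" by blast
    then have "\<mu> * v$a \<le> \<beta> * (r * u$a)" by (simp add: mu fb)
    then have "\<mu> * v$a \<le> r * v$a" using a by (simp add: algebra_simps)
    then have mu1: "\<mu> \<le> r" using vpos[of a] by simp
    have "\<forall>k. f (\<alpha> *\<^sub>R u) $ k \<le> f v $ k"
      using order_pres[OF scale_cone[OF u_pos apos] v] lb by simp
    then have "f (\<alpha> *\<^sub>R u) $ b \<le> f v $ b" by blast
    then have "\<alpha> * (r * u$b) \<le> \<mu> * v$b" by (simp add: mu fa)
    then have "r * v$b \<le> \<mu> * v$b" using b by (simp add: algebra_simps)
    then have mu2: "r \<le> \<mu>" using vpos[of b] by simp
    have "\<mu> = r" using mu1 mu2 by linarith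
    then have fv: "f v = r *\<^sub>R v" using mu by simp
    define J where "J = {k. v$k = \<beta> * u$k}"
    define L where "L = {k. v$k = \<alpha> * u$k}"
    have Jc: "\<forall>i\<in>J. \<forall>j. (i,j) \<in> arcs (matrix D) \<longrightarrow> j \<in> J"
    proof (intro ballI allI impI)
      fix i j assume i: "i \<in> J" and arc: "(i,j) \<in> arcs (matrix D)"
      have fi: "f v $ i = r * (\<beta> * u$i)" using fv i by (simp add: J_def)
      have "v$j = \<beta> * u$j" by (rule max_closed[OF order_pres homog u_pos u_eig deriv v bpos ub fi arc])
      then show "j \<in> J" by (simp add: J_def)
    qed
    have Lc: "\<forall>i\<in>L. \<forall>j. (i,j) \<in> arcs (matrix D) \<longrightarrow> j \<in> L"
    proof (intro ballI allI impI)
      fix i j assume i: "i \<in> L" and arc: "(i,j) \<in> arcs (matrix D)"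
      have fi: "f v $ i = r * (\<alpha> * u$i)" using fv i by (simp add: L_def)
      have "v$j = \<alpha> * u$j" by (rule min_closed[OF order_pres homog u_pos u_eig deriv v apos lb fi arc])
      then show "j \<in> L" by (simp add: L_def)
    qed
    obtain C1 where C1: "final_class (matrix D) C1" "C1 \<subseteq> J"
      using closed_final[of a J "matrix D"] Jc a by (auto simp: J_def)
    obtain C2 where C2: "final_class (matrix D) C2" "C2 \<subseteq> L"
      using closed_final[of b L "matrix D"] Lc b by (auto simp: L_def)
    have "C1 = C2" using unique_final C1(1) C2(1) by blast
    moreover obtain k where "k \<in> C1" using final_nonempty[OF C1(1)] by blast
    ultimately have "k \<in> J" "k \<in> L" using C1 C2 by auto
    then have "\<beta> * u$k = \<alpha> * u$k" by (simp add: J_def L_def)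
    then have ab: "\<beta> = \<alpha>" using upos[of k] by simp
    have "v = \<beta> *\<^sub>R u"
      unfolding vec_eq_iff
    proof
      fix k
      have "v$k \<le> \<beta> * u$k" using ub by blast
      moreover have "\<beta> * u$k \<le> v$k" using lb ab by simp
      ultimately show "v$k = (\<beta> *\<^sub>R u)$k" by simp
    qed
    then show "\<exists>c::real. v = c *\<^sub>R u" by blast
  qed

  have P2: "(\<forall>C. final_class (matrix D) C \<longrightarrow> primitive_class (matrix D) C) \<longrightarrow>
            (\<forall>x \<in> pos_cone. (\<lambda>k. (1 / N ((f ^^ k) x)) *\<^sub>R (f ^^ k) x) \<longlonglongrightarrow> u)"
  proof (intro impI ballI)
    assume prim: "\<forall>C. final_class (matrix D) C \<longrightarrow> primitive_class (matrix D) C"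
    fix x :: "real^'n" assume x: "x \<in> pos_cone"
    obtain j0 K where jK: "\<forall>i. (i,j0) \<in> (arcs (matrix D))^^K"
      using prim_reach[OF unique_final prim] by blast
    define g where "g z = (1/r) *\<^sub>R f z" for z
    have f_g: "f z = r *\<^sub>R g z" for z using rpos by (simp add: g_def)
    have g_cone: "g z \<in> pos_cone" if "z \<in> pos_cone" for z
      unfolding g_def using maps[OF that] rpos by (intro scale_cone) auto
    have g_mono: "\<forall>i. g z $ i \<le> g z' $ i" if "z \<in> pos_cone" "z' \<in> pos_cone" "\<forall>i. z $ i \<le> z' $ i" for z z'
    proof
      fix i
      have "f z $ i \<le> f z' $ i" using order_pres[OF that] by blast
      then show "g z $ i \<le> g z' $ i" using rpos by (simp add: g_def divide_right_mono)
    qed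
    have g_hom: "g (t *\<^sub>R z) = t *\<^sub>R g z" if "z \<in> pos_cone" "t > 0" for z t
      using homog[OF that] by (simp add: g_def)
    have g_u: "g u = u" using u_eig rpos by (simp add: g_def)
    have gk_cone: "(g^^k) z \<in> pos_cone" if "z \<in> pos_cone" for z k
      by (induction k) (auto simp: that g_cone)
    have g_seq: "(\<lambda>k. g (w k)) \<longlonglongrightarrow> g y" if "y \<in> pos_cone" "w \<longlonglongrightarrow> y" "\<And>k. w k \<in> pos_cone" for y w
      unfolding g_def using seq_cont[OF order_pres homog that] by (intro tendsto_intros)
    define xs where "xs k = (g^^k) x" for k
    define M where "M k = Mx (xs k)" for k
    define m where "m k = mn (xs k)" for k
    have xs_cone: "xs k \<in> pos_cone" for k using gk_cone[OF x] by (simp add: xs_def)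
    have xs_Suc: "xs (Suc k) = g (xs k)" for k by (simp add: xs_def)
    have Mx_dec: "Mx (g z) \<le> Mx z" if z: "z \<in> pos_cone" for z
    proof -
      have "\<forall>k. z$k \<le> (Mx z *\<^sub>R u)$k" using Mx_ge by simp
      then have "\<forall>k. g z $ k \<le> g (Mx z *\<^sub>R u) $ k"
        using g_mono[OF z scale_cone[OF u_pos Mx_pos[OF z]]] by blast
      moreover have "g (Mx z *\<^sub>R u) = Mx z *\<^sub>R u" using g_hom[OF u_pos Mx_pos[OF z]] g_u by simp
      ultimately have le: "\<forall>k. g z $ k \<le> Mx z * u$k" by simp
      obtain k where "g z $ k = Mx (g z) * u$k" using Mx_at by blast
      then have "Mx (g z) * u$k \<le> Mx z * u$k" using le[rule_format, of k] by simp
      then show ?thesis using upos[of k] by simp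
    qed
    have mn_inc: "mn z \<le> mn (g z)" if z: "z \<in> pos_cone" for z
    proof -
      have "\<forall>k. (mn z *\<^sub>R u)$k \<le> z$k" using mn_le by simp
      then have "\<forall>k. g (mn z *\<^sub>R u) $ k \<le> g z $ k"
        using g_mono[OF scale_cone[OF u_pos mn_pos[OF z]] z] by blast
      moreover have "g (mn z *\<^sub>R u) = mn z *\<^sub>R u" using g_hom[OF u_pos mn_pos[OF z]] g_u by simp
      ultimately have le: "\<forall>k. mn z * u$k \<le> g z $ k" by simp
      obtain k where "g z $ k = mn (g z) * u$k" using mn_at by blast
      then have "mn z * u$k \<le> mn (g z) * u$k" using le[rule_format, of k] by simp
      then show ?thesis using upos[of k] by simp
    qed
    have Mdec: "decseq M" by (rule decseq_SucI) (simp add: M_def xs_Suc Mx_dec xs_cone)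
    have minc: "incseq m" by (rule incseq_SucI) (simp add: m_def xs_Suc mn_inc xs_cone)
    have m0: "m 0 \<le> m k" for k using minc by (simp add: incseq_def)
    have M0: "M k \<le> M 0" for k using Mdec by (simp add: decseq_def)
    have mM: "m k \<le> M k" for k by (simp add: m_def M_def mn_Mx)
    have m0pos: "0 < m 0" using mn_pos[OF xs_cone] by (simp add: m_def)
    have m0M: "m 0 \<le> M k" for k using m0[of k] mM[of k] by linarith
    have mM0: "m k \<le> M 0" for k using M0[of k] mM[of k] by linarith
    obtain Ms where Ms: "M \<longlonglongrightarrow> Ms" "\<forall>k. Ms \<le> M k"
      using decseq_convergent[OF Mdec, of "m 0"] m0M by blast
    obtain ms where ms: "m \<longlonglongrightarrow> ms" "\<forall>k. m k \<le> ms"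
      using incseq_convergent[OF minc, of "M 0"] mM0 by blast
    have Ms_pos: "0 < Ms"
    proof -
      have "m 0 \<le> Ms" using Ms(1) by (rule LIMSEQ_le_const) (use m0M in blast)
      then show ?thesis using m0pos by simp
    qed
    have ms_pos: "0 < ms" using ms(2)[rule_format, of 0] m0pos by simp
    have xs_bnd: "m k * u$i \<le> xs k $ i \<and> xs k $ i \<le> M k * u$i" for k i
      using Mx_ge mn_le by (simp add: M_def m_def)
    have "bounded (range xs)"
      unfolding bounded_iff
    proof (intro exI ballI)
      fix z assume "z \<in> range xs"
      then obtain k where z: "z = xs k" by blast
      have "norm z \<le> (\<Sum>i\<in>UNIV. \<bar>z$i\<bar>)" by (rule norm_le_l1_cart)
      also have "\<dots> \<le> (\<Sum>i\<in>UNIV. M 0 * u$i)"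
      proof (rule sum_mono)
        fix i
        have "0 < z$i" using xs_cone[of k] z by (simp add: pos_cone_def)
        moreover have "z$i \<le> M 0 * u$i"
        proof -
          have "M k * u$i \<le> M 0 * u$i" using M0[of k] upos[of i] by (intro mult_right_mono) simp_all
          then show ?thesis using xs_bnd[of k i] unfolding z by linarith
        qed
        ultimately show "\<bar>z$i\<bar> \<le> M 0 * u$i" by simp
      qed
      finally show "norm z \<le> (\<Sum>i\<in>UNIV. M 0 * u$i)" .
    qed
    then obtain y \<sigma> where \<sigma>: "strict_mono \<sigma>" "(xs \<circ> \<sigma>) \<longlonglongrightarrow> y"
      using bounded_imp_convergent_subsequence by blast
    have y: "y \<in> pos_cone"
      unfolding pos_cone_def
    proof (intro CollectI allI)
      fix i
      have "(\<lambda>j. xs (\<sigma> j) $ i) \<longlonglongrightarrow> y $ i" using tendsto_vec_nth[OF \<sigma>(2)] by (simp add: o_def)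
      moreover have "\<forall>j. m 0 * u$i \<le> xs (\<sigma> j) $ i"
      proof
        fix j
        have "m 0 * u$i \<le> m (\<sigma> j) * u$i" using m0[of "\<sigma> j"] upos[of i] by (intro mult_right_mono) simp_all
        then show "m 0 * u$i \<le> xs (\<sigma> j) $ i" using xs_bnd[of "\<sigma> j" i] by linarith
      qed
      ultimately have "m 0 * u$i \<le> y $ i" by (intro LIMSEQ_le_const) auto
      moreover have "0 < m 0 * u$i" using m0pos upos[of i] by simp
      ultimately show "0 < y $ i" by linarith
    qed
    define yk where "yk k = (g^^k) y" for k
    have yk_cone: "yk k \<in> pos_cone" for k using gk_cone[OF y] by (simp add: yk_def)
    have yk_Suc: "yk (Suc k) = g (yk k)" for k by (simp add: yk_def)
    have conv: "(\<lambda>j. xs (\<sigma> j + k)) \<longlonglongrightarrow> yk k" for k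
    proof (induction k)
      case 0 then show ?case using \<sigma>(2) by (simp add: o_def yk_def)
    next
      case (Suc k)
      have "(\<lambda>j. g (xs (\<sigma> j + k))) \<longlonglongrightarrow> g (yk k)"
        by (rule g_seq[OF yk_cone Suc xs_cone])
      then show ?case by (simp add: xs_Suc yk_Suc)
    qed
    have smk: "strict_mono (\<lambda>j. \<sigma> j + k)" for k using \<sigma>(1) by (simp add: strict_mono_def)
    have Mlim: "(\<lambda>j. M (\<sigma> j + k)) \<longlonglongrightarrow> Ms" for k
      using LIMSEQ_subseq_LIMSEQ[OF Ms(1) smk[of k]] by (simp add: o_def)
    have mlim: "(\<lambda>j. m (\<sigma> j + k)) \<longlonglongrightarrow> ms" for k
      using LIMSEQ_subseq_LIMSEQ[OF ms(1) smk[of k]] by (simp add: o_def)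
    have convi: "(\<lambda>j. xs (\<sigma> j + k) $ i) \<longlonglongrightarrow> yk k $ i" for k i
      using tendsto_vec_nth[OF conv[of k]] .
    have yk_le: "yk k $ i \<le> Ms * u$i" for k i
    proof (rule LIMSEQ_le[OF convi])
      show "(\<lambda>j. M (\<sigma> j + k) * u$i) \<longlonglongrightarrow> Ms * u$i" by (intro tendsto_intros Mlim)
      show "\<exists>N. \<forall>n\<ge>N. xs (\<sigma> n + k) $ i \<le> M (\<sigma> n + k) * u $ i" using xs_bnd by blast
    qed
    have yk_ge: "ms * u$i \<le> yk k $ i" for k i
    proof (rule LIMSEQ_le[OF _ convi])
      show "(\<lambda>j. m (\<sigma> j + k) * u$i) \<longlonglongrightarrow> ms * u$i" by (intro tendsto_intros mlim)
      show "\<exists>N. \<forall>n\<ge>N. m (\<sigma> n + k) * u $ i \<le> xs (\<sigma> n + k) $ i" using xs_bnd by blast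
    qed
    have yk_atM: "\<exists>i. yk k $ i = Ms * u$i" for k
    proof (rule ccontr)
      assume na: "\<not> (\<exists>i. yk k $ i = Ms * u$i)"
      have lt: "yk k $ i < Ms * u$i" for i
      proof -
        have "yk k $ i \<noteq> Ms * u$i" using na by blast
        then show ?thesis using yk_le[of k i] by linarith
      qed
      have "eventually (\<lambda>j. xs (\<sigma> j + k) $ i < Ms * u$i) sequentially" for i
        using order_tendstoD(2)[OF convi lt] .
      then have "eventually (\<lambda>j. \<forall>i. xs (\<sigma> j + k) $ i < Ms * u$i) sequentially"
        by (rule eventually_all_finite)
      then obtain n where n: "\<forall>i. xs (\<sigma> n + k) $ i < Ms * u$i"
        unfolding eventually_sequentially by blast
      obtain i where "xs (\<sigma> n + k) $ i = M (\<sigma> n + k) * u$i" using Mx_at[of "xs (\<sigma> n + k)"] unfolding M_def by blast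
      moreover have "Ms * u$i \<le> M (\<sigma> n + k) * u$i"
        using Ms(2) upos[of i] by (intro mult_right_mono) simp_all
      ultimately show False using n[rule_format, of i] by linarith
    qed
    have yk_atm: "\<exists>i. yk k $ i = ms * u$i" for k
    proof (rule ccontr)
      assume na: "\<not> (\<exists>i. yk k $ i = ms * u$i)"
      have lt: "ms * u$i < yk k $ i" for i
      proof -
        have "yk k $ i \<noteq> ms * u$i" using na by blast
        moreover have "ms * u$i \<le> yk k $ i" by (rule yk_ge)
        ultimately show ?thesis by linarith
      qed
      have "eventually (\<lambda>j. ms * u$i < xs (\<sigma> j + k) $ i) sequentially" for i
        using order_tendstoD(1)[OF convi lt] .
      then have "eventually (\<lambda>j. \<forall>i. ms * u$i < xs (\<sigma> j + k) $ i) sequentially"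
        by (rule eventually_all_finite)
      then obtain n where n: "\<forall>i. ms * u$i < xs (\<sigma> n + k) $ i"
        unfolding eventually_sequentially by blast
      obtain i where "xs (\<sigma> n + k) $ i = m (\<sigma> n + k) * u$i" using mn_at[of "xs (\<sigma> n + k)"] unfolding m_def by blast
      moreover have "m (\<sigma> n + k) * u$i \<le> ms * u$i"
        using ms(2) upos[of i] by (intro mult_right_mono) simp_all
      ultimately show False using n[rule_format, of i] by linarith
    qed
    have pathM: "\<forall>i j. yk k $ i = Ms * u$i \<longrightarrow> (i,j) \<in> (arcs (matrix D))^^k \<longrightarrow> y $ j = Ms * u$j" for k
    proof (induction k)
      case 0 then show ?case by (simp add: yk_def)
    next
      case (Suc k)
      show ?case
      proof (intro allI impI)
        fix i j assume i: "yk (Suc k) $ i = Ms * u$i" and p: "(i,j) \<in> (arcs (matrix D))^^(Suc k)"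
        obtain i' where i': "(i,i') \<in> arcs (matrix D)" "(i',j) \<in> (arcs (matrix D))^^k"
          using relpow_Suc_D2[OF p] by blast
        have "f (yk k) $ i = r * (Ms * u$i)" using i f_g[of "yk k"] yk_Suc[of k] by simp
        moreover have "\<forall>k'. yk k $ k' \<le> Ms * u$k'" using yk_le by blast
        ultimately have "yk k $ i' = Ms * u$i'"
          using max_closed[OF order_pres homog u_pos u_eig deriv yk_cone Ms_pos _ _ i'(1)] by blast
        then show "y $ j = Ms * u$j" using Suc i'(2) by blast
      qed
    qed
    have pathm: "\<forall>i j. yk k $ i = ms * u$i \<longrightarrow> (i,j) \<in> (arcs (matrix D))^^k \<longrightarrow> y $ j = ms * u$j" for k
    proof (induction k)
      case 0 then show ?case by (simp add: yk_def)
    next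
      case (Suc k)
      show ?case
      proof (intro allI impI)
        fix i j assume i: "yk (Suc k) $ i = ms * u$i" and p: "(i,j) \<in> (arcs (matrix D))^^(Suc k)"
        obtain i' where i': "(i,i') \<in> arcs (matrix D)" "(i',j) \<in> (arcs (matrix D))^^k"
          using relpow_Suc_D2[OF p] by blast
        have "f (yk k) $ i = r * (ms * u$i)" using i f_g[of "yk k"] yk_Suc[of k] by simp
        moreover have "\<forall>k'. ms * u$k' \<le> yk k $ k'" using yk_ge by blast
        ultimately have "yk k $ i' = ms * u$i'"
          using min_closed[OF order_pres homog u_pos u_eig deriv yk_cone ms_pos _ _ i'(1)] by blast
        then show "y $ j = ms * u$j" using Suc i'(2) by blast
      qed
    qed
    obtain i0 where "yk K $ i0 = Ms * u$i0" using yk_atM by blast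
    then have e1: "y $ j0 = Ms * u$j0" using pathM jK by blast
    obtain i1 where "yk K $ i1 = ms * u$i1" using yk_atm by blast
    then have e2: "y $ j0 = ms * u$j0" using pathm jK by blast
    have Msms: "Ms = ms" using e1 e2 upos[of j0] by simp
    have xs_lim: "xs \<longlonglongrightarrow> Ms *\<^sub>R u"
    proof (rule vec_tendstoI)
      fix i
      have l1: "(\<lambda>k. m k * u$i) \<longlonglongrightarrow> Ms * u$i" using tendsto_mult[OF ms(1) tendsto_const[of "u$i"]] Msms by simp
      have l2: "(\<lambda>k. M k * u$i) \<longlonglongrightarrow> Ms * u$i" by (intro tendsto_intros Ms(1))
      have "(\<lambda>k. xs k $ i) \<longlonglongrightarrow> Ms * u$i"
        by (rule tendsto_sandwich[OF _ _ l1 l2]) (use xs_bnd in auto)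
      then show "(\<lambda>k. xs k $ i) \<longlonglongrightarrow> (Ms *\<^sub>R u) $ i" by simp
    qed
    have fk: "(f^^k) x = r^k *\<^sub>R xs k" for k
    proof (induction k)
      case 0 then show ?case by (simp add: xs_def)
    next
      case (Suc k)
      have "(f^^Suc k) x = f (r^k *\<^sub>R xs k)" using Suc by simp
      also have "\<dots> = r^k *\<^sub>R f (xs k)" using homog[OF xs_cone] rpos by simp
      also have "\<dots> = r^(Suc k) *\<^sub>R xs (Suc k)" using f_g xs_Suc by simp
      finally show ?case .
    qed
    have Nscale: "N (c *\<^sub>R z) = \<bar>c\<bar> * N z" for c z using norm unfolding is_norm_def by blast
    have Nnz: "N z \<noteq> 0" if "z \<in> pos_cone" for z
    proof -
      have "z \<noteq> 0" using that by (auto simp: pos_cone_def)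
      then show ?thesis using norm unfolding is_norm_def by blast
    qed
    have term_eq: "(1 / N ((f ^^ k) x)) *\<^sub>R (f ^^ k) x = (1 / N (xs k)) *\<^sub>R xs k" for k
    proof -
      have "r^k > 0" using rpos by simp
      moreover have "N (xs k) \<noteq> 0" using Nnz xs_cone by blast
      ultimately show ?thesis using rpos by (simp add: fk Nscale)
    qed
    have NMs: "N (Ms *\<^sub>R u) = Ms" using Nscale u_norm Ms_pos by simp
    have "(\<lambda>k. (1 / N (xs k)) *\<^sub>R xs k) \<longlonglongrightarrow> (1 / N (Ms *\<^sub>R u)) *\<^sub>R (Ms *\<^sub>R u)"
      using NMs Ms_pos by (intro tendsto_intros N_cont[OF norm xs_lim] xs_lim) simp
    then show "(\<lambda>k. (1 / N ((f ^^ k) x)) *\<^sub>R (f ^^ k) x) \<longlonglongrightarrow> u"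
      using NMs Ms_pos by (simp add: term_eq)
  qed
  show ?thesis using P1 P2 by blast
qed

end
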